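(* Let $n$ and $m$ be coprime positive integers. Then $c_{\mathrm{poly}}(nm)\geq c_{\mathrm{poly}}(n)\,c_{\mathrm{poly}}(m)$.
   Context: $S(\mathbb{Z}_n)$ is the set of bijections $\mathbb{Z}_n\to\mathbb{Z}_n$, and $S_{\mathrm{poly}}(\mathbb{Z}_n)$ is the set of $\pi\in S(\mathbb{Z}_n)$ for which there is a polynomial $f\in\mathbb{Z}_n[x]$ with $\pi(x)=f(x)$ for all $x\in\mathbb{Z}_n$. $\mathrm{cyc}(\pi)$ is the number of cycles (including fixed points) of $\pi$. Define $c_{\mathrm{poly}}(n)=\min_{\pi\in S_{\mathrm{poly}}(\mathbb{Z}_n)}\max_{k\in\mathbb{Z}_n}\mathrm{cyc}(x\mapsto\pi(x+k))$. *)

theory Defs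
  imports "HOL-Computational_Algebra.Polynomial"
begin

text \<open>Z_n is modelled by {0..<n} (n > 0); maps Z_n -> Z_n are functions nat => nat,
  normalised to be the identity outside {0..<n}.\<close>

definition perm_Zn :: "nat \<Rightarrow> (nat \<Rightarrow> nat) set" where
  "perm_Zn n = {\<pi>. bij_betw \<pi> {0..<n} {0..<n} \<and> (\<forall>x. n \<le> x \<longrightarrow> \<pi> x = x)}"

definition poly_perm_Zn :: "nat \<Rightarrow> (nat \<Rightarrow> nat) set" where
  "poly_perm_Zn n = {\<pi> \<in> perm_Zn n.
     \<exists>f :: int poly. \<forall>x<n. int (\<pi> x) = poly f (int x) mod int n}"

text \<open>Number of cycles (including fixed points) of a permutation of {0..<n}: the number of
  orbits, i.e. equivalence classes of x ~ y iff y = pi^k(x) for some k.\<close>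
definition cyc :: "nat \<Rightarrow> (nat \<Rightarrow> nat) \<Rightarrow> nat" where
  "cyc n \<pi> = card ({0..<n} // {(x, y). x < n \<and> y < n \<and> (\<exists>k. (\<pi> ^^ k) x = y)})"

definition shift_Zn :: "nat \<Rightarrow> (nat \<Rightarrow> nat) \<Rightarrow> nat \<Rightarrow> (nat \<Rightarrow> nat)" where
  "shift_Zn n \<pi> k = (\<lambda>x. if x < n then \<pi> ((x + k) mod n) else x)"

definition c_poly :: "nat \<Rightarrow> nat" where
  "c_poly n = Min ((\<lambda>\<pi>. Max ((\<lambda>k. cyc n (shift_Zn n \<pi> k)) ` {0..<n})) ` poly_perm_Zn n)"

end

theory Submission
  imports Defs "HOL-Number_Theory.Cong" "HOL-Library.FuncSet"
begin

definition orbs :: "nat \<Rightarrow> (nat \<Rightarrow> nat) \<Rightarrow> nat set set" where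
  "orbs n \<sigma> = (\<lambda>x. {y. y < n \<and> (\<exists>k. (\<sigma>^^k) x = y)}) ` {0..<n}"

lemma cyc_orbs: "cyc n \<sigma> = card (orbs n \<sigma>)"
  unfolding cyc_def orbs_def quotient_def
  by (rule arg_cong[where f=card]) (auto simp: Image_def)

lemma poly_cong_int:
  fixes f :: "int poly"
  assumes xy: "x mod d = y mod d"
  shows "poly f x mod d = poly f y mod d"
proof (induction f)
  case 0
  then show ?case by simp
next
  case (pCons a p)
  have "(x * poly p x) mod d = (y * poly p y) mod d"
    by (rule mod_mult_cong[OF xy pCons.IH])
  then have "(a + x * poly p x) mod d = (a + y * poly p y) mod d"
    by (rule mod_add_cong[OF refl])
  then show ?case by simp
qed

lemma iter_facts:
  fixes \<rho> \<sigma> :: "nat \<Rightarrow> nat"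
  assumes into: "\<forall>x<N. \<rho> x < N" and com: "\<forall>x<N. \<rho> x mod n = \<sigma> (x mod n)"
    and dv: "n dvd N" and np: "0 < n" and Np: "0 < N" and x: "x < N"
  shows "(\<rho>^^k) x < N \<and> (\<rho>^^k) x mod n = (\<sigma>^^k) (x mod n) \<and> (\<sigma>^^k) (x mod n) < n"
proof (induction k)
  case 0
  then show ?case using x np by simp
next
  case (Suc k)
  have nN: "n \<le> N" using dv Np by (simp add: dvd_imp_le)
  have sig: "\<sigma> a < n" if "a < n" for a
  proof -
    have "a < N" using that nN by simp
    then have "\<rho> a mod n = \<sigma> (a mod n)" using com by blast
    moreover have "a mod n = a" using that by simp
    moreover have "\<rho> a mod n < n" using np by simp
    ultimately show ?thesis by simp
  qed
  let ?y = "(\<rho>^^k) x"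
  have y: "?y < N" "?y mod n = (\<sigma>^^k) (x mod n)" "(\<sigma>^^k) (x mod n) < n" using Suc by auto
  have "(\<rho>^^Suc k) x = \<rho> ?y" by simp
  moreover have "\<rho> ?y < N" using into y(1) by blast
  moreover have "\<rho> ?y mod n = \<sigma> (?y mod n)" using com y(1) by blast
  moreover have "(\<sigma>^^Suc k) (x mod n) = \<sigma> ((\<sigma>^^k) (x mod n))" by simp
  moreover have "\<sigma> ((\<sigma>^^k) (x mod n)) < n" using sig y(3) by blast
  ultimately show ?case using y(2) by simp
qed

lemma orbit_image:
  fixes \<rho> \<sigma> :: "nat \<Rightarrow> nat"
  assumes into: "\<forall>x<N. \<rho> x < N" and com: "\<forall>x<N. \<rho> x mod n = \<sigma> (x mod n)"
    and dv: "n dvd N" and np: "0 < n" and Np: "0 < N" and x: "x < N"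
  shows "(\<lambda>y. y mod n) ` {y. y < N \<and> (\<exists>k. (\<rho>^^k) x = y)}
       = {y. y < n \<and> (\<exists>k. (\<sigma>^^k) (x mod n) = y)}"
proof -
  have I: "\<And>k. (\<rho>^^k) x < N \<and> (\<rho>^^k) x mod n = (\<sigma>^^k) (x mod n) \<and> (\<sigma>^^k) (x mod n) < n"
    using iter_facts[OF into com dv np Np x] by blast
  have A: "{y. y < N \<and> (\<exists>k. (\<rho>^^k) x = y)} = range (\<lambda>k. (\<rho>^^k) x)"
    using I by auto
  have B: "{y. y < n \<and> (\<exists>k. (\<sigma>^^k) (x mod n) = y)} = range (\<lambda>k. (\<sigma>^^k) (x mod n))"
    using I by auto
  have C: "(\<lambda>y. y mod n) ` range (\<lambda>k. (\<rho>^^k) x) = range (\<lambda>k. (\<sigma>^^k) (x mod n))"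
    unfolding image_image using I by simp
  show ?thesis unfolding A B C ..
qed

lemma cyc_prod:
  fixes \<rho> \<sigma> \<tau> :: "nat \<Rightarrow> nat"
  assumes into: "\<forall>x<n*m. \<rho> x < n*m"
    and com1: "\<forall>x<n*m. \<rho> x mod n = \<sigma> (x mod n)"
    and com2: "\<forall>x<n*m. \<rho> x mod m = \<tau> (x mod m)"
    and np: "0 < n" and mp: "0 < m" and cop: "coprime n m"
  shows "cyc n \<sigma> * cyc m \<tau> \<le> cyc (n*m) \<rho>"
proof -
  let ?F = "\<lambda>S. ((\<lambda>y. y mod n) ` S, (\<lambda>y. y mod m) ` S)"
  have Np: "0 < n*m" using np mp by simp
  have "orbs n \<sigma> \<times> orbs m \<tau> \<subseteq> ?F ` orbs (n*m) \<rho>"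
  proof
    fix p assume "p \<in> orbs n \<sigma> \<times> orbs m \<tau>"
    then obtain a b where ab: "a < n" "b < m"
      "p = ({y. y < n \<and> (\<exists>k. (\<sigma>^^k) a = y)}, {y. y < m \<and> (\<exists>k. (\<tau>^^k) b = y)})"
      unfolding orbs_def by auto
    obtain x0 where x0: "[x0 = a] (mod n)" "[x0 = b] (mod m)"
      using binary_chinese_remainder_nat[OF cop] by blast
    define x where "x = x0 mod (n*m)"
    have xl: "x < n*m" using Np x_def by simp
    have xa: "x mod n = a" using x0(1) ab(1) unfolding x_def cong_def
      by (simp add: mod_mod_cancel)
    have xb: "x mod m = b" using x0(2) ab(2) unfolding x_def cong_def
      by (simp add: mod_mod_cancel)
    have "?F {y. y < n*m \<and> (\<exists>k. (\<rho>^^k) x = y)} = p"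
    proof -
      have d1: "n dvd n*m" and d2: "m dvd n*m" by simp_all
      show ?thesis
        using orbit_image[OF into com1 d1 np Np xl] orbit_image[OF into com2 d2 mp Np xl] xa xb ab(3)
        by simp
    qed
    moreover have "{y. y < n*m \<and> (\<exists>k. (\<rho>^^k) x = y)} \<in> orbs (n*m) \<rho>"
      unfolding orbs_def using xl by auto
    ultimately show "p \<in> ?F ` orbs (n*m) \<rho>" by blast
  qed
  moreover have "finite (orbs (n*m) \<rho>)" unfolding orbs_def by simp
  ultimately have "card (orbs n \<sigma> \<times> orbs m \<tau>) \<le> card (orbs (n*m) \<rho>)"
    by (rule surj_card_le[rotated])
  then show ?thesis by (simp add: cyc_orbs card_cartesian_product)
qed

definition red :: "nat \<Rightarrow> (nat \<Rightarrow> nat) \<Rightarrow> (nat \<Rightarrow> nat)" where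
  "red d \<pi> = (\<lambda>y. if y < d then \<pi> y mod d else y)"

lemma poly_perm_mod:
  assumes "\<pi> \<in> poly_perm_Zn N" "d dvd N" "0 < d" "0 < N" "y < N"
  shows "\<pi> y mod d = \<pi> (y mod d) mod d"
proof -
  obtain f :: "int poly" where f: "\<forall>x<N. int (\<pi> x) = poly f (int x) mod int N"
    using assms(1) unfolding poly_perm_Zn_def by auto
  have dN: "d \<le> N" using assms by (simp add: dvd_imp_le)
  have ym: "y mod d < N" using assms dN by (meson less_le_trans mod_less_divisor)
  have dv: "int d dvd int N" using assms(2) by simp
  have "int (\<pi> y mod d) = poly f (int y) mod int d"
    using f assms(5) dv by (simp add: of_nat_mod mod_mod_cancel)
  also have "\<dots> = poly f (int (y mod d)) mod int d"
    by (rule poly_cong_int) (simp add: of_nat_mod)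
  also have "\<dots> = int (\<pi> (y mod d) mod d)"
    using f ym dv by (simp add: of_nat_mod mod_mod_cancel)
  finally show ?thesis by simp
qed

lemma red_poly_perm:
  assumes "\<pi> \<in> poly_perm_Zn N" "d dvd N" "0 < d" "0 < N"
  shows "red d \<pi> \<in> poly_perm_Zn d"
proof -
  obtain f :: "int poly" where f: "\<forall>x<N. int (\<pi> x) = poly f (int x) mod int N"
    using assms(1) unfolding poly_perm_Zn_def by auto
  have bij: "bij_betw \<pi> {0..<N} {0..<N}" using assms(1)
    unfolding poly_perm_Zn_def perm_Zn_def by auto
  have dN: "d \<le> N" using assms by (simp add: dvd_imp_le)
  have dv: "int d dvd int N" using assms(2) by simp
  have sub: "red d \<pi> ` {0..<d} \<subseteq> {0..<d}" unfolding red_def using assms(3) by auto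
  have sur: "{0..<d} \<subseteq> red d \<pi> ` {0..<d}"
  proof
    fix z assume z: "z \<in> {0..<d}"
    then have "z \<in> \<pi> ` {0..<N}" using bij dN unfolding bij_betw_def by auto
    then obtain y where y: "y < N" "\<pi> y = z" by auto
    have "red d \<pi> (y mod d) = z"
      unfolding red_def using poly_perm_mod[OF assms y(1)] y z assms(3) by auto
    moreover have "y mod d \<in> {0..<d}" using assms(3) by simp
    ultimately show "z \<in> red d \<pi> ` {0..<d}" by (metis imageI)
  qed
  have im: "red d \<pi> ` {0..<d} = {0..<d}" using sub sur by blast
  then have "inj_on (red d \<pi>) {0..<d}"
    by (simp add: eq_card_imp_inj_on)
  then have "bij_betw (red d \<pi>) {0..<d} {0..<d}" using im by (simp add: bij_betw_def)
  moreover have "\<forall>x. d \<le> x \<longrightarrow> red d \<pi> x = x" unfolding red_def by auto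
  moreover have "\<forall>x<d. int (red d \<pi> x) = poly f (int x) mod int d"
  proof (intro allI impI)
    fix x assume x: "x < d"
    then have "x < N" using dN by simp
    then show "int (red d \<pi> x) = poly f (int x) mod int d"
      using f x dv unfolding red_def by (simp add: of_nat_mod mod_mod_cancel)
  qed
  ultimately show ?thesis unfolding poly_perm_Zn_def perm_Zn_def by blast
qed

lemma finite_perm: "finite (perm_Zn N)"
proof (rule inj_on_finite[where f="\<lambda>\<pi>. restrict \<pi> {0..<N}"])
  show "inj_on (\<lambda>\<pi>. restrict \<pi> {0..<N}) (perm_Zn N)"
  proof (rule inj_onI)
    fix p q assume p: "p \<in> perm_Zn N" and q: "q \<in> perm_Zn N"
      and e: "restrict p {0..<N} = restrict q {0..<N}"
    show "p = q"
    proof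
      fix x show "p x = q x"
      proof (cases "x < N")
        case True then show ?thesis using e by (metis atLeastLessThan_iff restrict_apply' zero_le)
      next
        case False then show ?thesis using p q unfolding perm_Zn_def by auto
      qed
    qed
  qed
  show "(\<lambda>\<pi>. restrict \<pi> {0..<N}) ` perm_Zn N \<subseteq> PiE {0..<N} (\<lambda>_. {0..<N})"
    unfolding perm_Zn_def bij_betw_def by auto
  show "finite (PiE {0..<N} (\<lambda>_. {0..<N}))" by (simp add: finite_PiE)
qed

lemma finite_poly_perm: "finite (poly_perm_Zn N)"
  using finite_perm by (rule rev_finite_subset) (auto simp: poly_perm_Zn_def)

lemma id_poly_perm: "id \<in> poly_perm_Zn N"
proof -
  have "\<forall>x<N. int (id x) = poly [:0, 1:] (int x) mod int N" by simp
  then have "\<exists>f :: int poly. \<forall>x<N. int (id x) = poly f (int x) mod int N" by (rule exI)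
  moreover have "id \<in> perm_Zn N" unfolding perm_Zn_def by auto
  ultimately show ?thesis unfolding poly_perm_Zn_def by blast
qed

abbreviation G where "G N \<pi> \<equiv> Max ((\<lambda>k. cyc N (shift_Zn N \<pi> k)) ` {0..<N})"

lemma c_poly_le: "\<pi> \<in> poly_perm_Zn N \<Longrightarrow> c_poly N \<le> G N \<pi>"
  unfolding c_poly_def by (rule Min_le) (auto simp: finite_poly_perm)

lemma shift_com:
  assumes "\<pi> \<in> poly_perm_Zn N" "d dvd N" "0 < d" "0 < N"
  shows "\<forall>x<N. shift_Zn N \<pi> k x mod d = shift_Zn d (red d \<pi>) k (x mod d)"
proof (intro allI impI)
  fix x assume x: "x < N"
  define y where "y = (x + k) mod N"
  have y: "y < N" using assms y_def by simp
  have ym: "y mod d = (x mod d + k) mod d" using assms(2) unfolding y_def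
    by (simp add: mod_mod_cancel mod_add_left_eq)
  have "shift_Zn N \<pi> k x mod d = \<pi> y mod d" unfolding shift_Zn_def y_def using x by simp
  also have "\<dots> = \<pi> (y mod d) mod d" by (rule poly_perm_mod[OF assms y])
  also have "\<dots> = shift_Zn d (red d \<pi>) k (x mod d)"
    unfolding shift_Zn_def red_def using ym assms(3) by simp
  finally show "shift_Zn N \<pi> k x mod d = shift_Zn d (red d \<pi>) k (x mod d)" .
qed

lemma shift_into:
  assumes "\<pi> \<in> poly_perm_Zn N" "0 < N"
  shows "\<forall>x<N. shift_Zn N \<pi> k x < N"
proof -
  have "bij_betw \<pi> {0..<N} {0..<N}" using assms(1)
    unfolding poly_perm_Zn_def perm_Zn_def by auto
  then have "\<forall>y<N. \<pi> y < N" unfolding bij_betw_def by auto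
  then show ?thesis unfolding shift_Zn_def using assms(2) by simp
qed

lemma shift_mod: "shift_Zn d p k = shift_Zn d p (k mod d)"
  unfolding shift_Zn_def by (metis mod_add_right_eq)

lemma G_attained:
  assumes "0 < d"
  shows "\<exists>k<d. G d p = cyc d (shift_Zn d p k)"
proof -
  have "G d p \<in> (\<lambda>k. cyc d (shift_Zn d p k)) ` {0..<d}"
    by (rule Max_in) (use assms in auto)
  then show ?thesis by auto
qed

theorem lemma5p1:
  fixes n m :: nat
  assumes "0 < n" and "0 < m" and "coprime n m"
  shows "c_poly (n * m) \<ge> c_poly n * c_poly m"
proof -
  have Np: "0 < n*m" using assms by simp
  have "c_poly n * c_poly m \<le> G (n*m) \<pi>" if pi: "\<pi> \<in> poly_perm_Zn (n*m)" for \<pi>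
  proof -
    have pn: "red n \<pi> \<in> poly_perm_Zn n" by (rule red_poly_perm[OF pi _ assms(1) Np]) simp
    have pm: "red m \<pi> \<in> poly_perm_Zn m" by (rule red_poly_perm[OF pi _ assms(2) Np]) simp
    obtain k1 where k1: "k1 < n" "G n (red n \<pi>) = cyc n (shift_Zn n (red n \<pi>) k1)"
      using G_attained[OF assms(1), of "red n \<pi>"] by (elim exE conjE) (rule that)
    obtain k2 where k2: "k2 < m" "G m (red m \<pi>) = cyc m (shift_Zn m (red m \<pi>) k2)"
      using G_attained[OF assms(2), of "red m \<pi>"] by (elim exE conjE) (rule that)
    obtain k0 where k0: "[k0 = k1] (mod n)" "[k0 = k2] (mod m)"
      using binary_chinese_remainder_nat[OF assms(3)] by blast
    define k where "k = k0 mod (n*m)"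
    have kl: "k < n*m" using Np k_def by simp
    have ka: "k mod n = k1" using k0(1) k1(1) unfolding k_def cong_def
      by (simp add: mod_mod_cancel)
    have kb: "k mod m = k2" using k0(2) k2(1) unfolding k_def cong_def
      by (simp add: mod_mod_cancel)
    have "c_poly n * c_poly m \<le> G n (red n \<pi>) * G m (red m \<pi>)"
      using c_poly_le[OF pn] c_poly_le[OF pm] by (rule mult_le_mono)
    also have "\<dots> = cyc n (shift_Zn n (red n \<pi>) k) * cyc m (shift_Zn m (red m \<pi>) k)"
      using k1 k2 ka kb shift_mod by metis
    also have "\<dots> \<le> cyc (n*m) (shift_Zn (n*m) \<pi> k)"
    proof -
      have d1: "n dvd n*m" and d2: "m dvd n*m" by simp_all
      show ?thesis
        using cyc_prod[OF shift_into[OF pi Np] shift_com[OF pi d1 assms(1) Np]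
            shift_com[OF pi d2 assms(2) Np] assms] .
    qed
    also have "\<dots> \<le> G (n*m) \<pi>"
    proof (rule Max_ge)
      show "finite ((\<lambda>k. cyc (n*m) (shift_Zn (n*m) \<pi> k)) ` {0..<n*m})" by simp
      show "cyc (n*m) (shift_Zn (n*m) \<pi> k) \<in> (\<lambda>k. cyc (n*m) (shift_Zn (n*m) \<pi> k)) ` {0..<n*m}"
        using kl by simp
    qed
    finally show ?thesis .
  qed
  then show ?thesis unfolding c_poly_def
    using finite_poly_perm id_poly_perm by (intro Min.boundedI) auto
qed

end
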